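(* Let $r_1,\dots,r_k$ be positive integers, let $\Omega_1,\dots,\Omega_k$ be pairwise disjoint non-empty finite sets, and for each $i$ let $G_i\leq\mathrm{Sym}(\Omega_i)$ be a cyclic permutation group of order $r_i$. Then the internal direct product $G_1\cdot G_2\cdots G_k$, acting on $\Omega_1\cup\cdots\cup\Omega_k$, has the EKR property.
   Context: The internal direct product consists of the products $g_1\cdots g_k$ with $g_i\in G_i$, multiplied componentwise, acting on $\Omega=\bigcup\Omega_i$ by $x^{g_1\cdots g_k}=x^{g_i}$ for $x\in\Omega_i$. Two elements $\pi,\tau$ of a permutation group intersect if $\pi\tau^{-1}$ has a fixed point; a subset is intersecting if every pair intersects; the group has the EKR property if every intersecting subset has size at most the size of the largest point-stabilizer. *)

theory Defs
  imports "HOL-Combinatorics.Permutations"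
begin

definition perm_group :: "'a set \<Rightarrow> ('a \<Rightarrow> 'a) set \<Rightarrow> bool" where
  "perm_group \<Omega> G \<longleftrightarrow> G \<subseteq> {p. p permutes \<Omega>} \<and> id \<in> G \<and>
     (\<forall>p\<in>G. \<forall>q\<in>G. p \<circ> q \<in> G) \<and> (\<forall>p\<in>G. inv p \<in> G)"

definition cyclic_of_order :: "('a \<Rightarrow> 'a) set \<Rightarrow> nat \<Rightarrow> bool" where
  "cyclic_of_order G r \<longleftrightarrow> (\<exists>g\<in>G. G = range (\<lambda>n. g ^^ n)) \<and> card G = r"

definition int_dprod :: "'i set \<Rightarrow> ('i \<Rightarrow> 'a set) \<Rightarrow> ('i \<Rightarrow> ('a \<Rightarrow> 'a) set) \<Rightarrow> ('a \<Rightarrow> 'a) set" where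
  "int_dprod I \<Omega> G = {\<pi>. \<exists>g. (\<forall>i\<in>I. g i \<in> G i) \<and> (\<forall>i\<in>I. \<forall>x\<in>\<Omega> i. \<pi> x = g i x)
       \<and> (\<forall>x. x \<notin> (\<Union>i\<in>I. \<Omega> i) \<longrightarrow> \<pi> x = x)}"

text \<open>Right action: x^(\<pi> \<tau>^-1) = inv \<tau> (\<pi> x).\<close>
definition intersect :: "'a set \<Rightarrow> ('a \<Rightarrow> 'a) \<Rightarrow> ('a \<Rightarrow> 'a) \<Rightarrow> bool" where
  "intersect \<Omega> \<pi> \<tau> \<longleftrightarrow> (\<exists>x\<in>\<Omega>. (inv \<tau> \<circ> \<pi>) x = x)"

definition intersecting :: "'a set \<Rightarrow> ('a \<Rightarrow> 'a) set \<Rightarrow> bool" where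
  "intersecting \<Omega> S \<longleftrightarrow> (\<forall>\<pi>\<in>S. \<forall>\<tau>\<in>S. intersect \<Omega> \<pi> \<tau>)"

definition stabilizer :: "('a \<Rightarrow> 'a) set \<Rightarrow> 'a \<Rightarrow> ('a \<Rightarrow> 'a) set" where
  "stabilizer G x = {g \<in> G. g x = x}"

definition EKR_property :: "'a set \<Rightarrow> ('a \<Rightarrow> 'a) set \<Rightarrow> bool" where
  "EKR_property \<Omega> G \<longleftrightarrow>
     (\<forall>S. S \<subseteq> G \<and> intersecting \<Omega> S \<longrightarrow> card S \<le> Max ((\<lambda>x. card (stabilizer G x)) ` \<Omega>))"

end

theory Submission
  imports Defs "HOL-Library.FuncSet"
begin

lemma perm_pow_id:
  fixes c :: "'a \<Rightarrow> 'a"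
  assumes "c permutes A" "finite (range (\<lambda>n. c^^n))"
  shows "\<exists>n>0. c^^n = id"
proof -
  have "\<not> inj (\<lambda>n::nat. c^^n)"
    using assms(2) finite_imageD by (metis infinite_UNIV_nat)
  then obtain a b where ab: "a \<noteq> b" "c^^a = c^^b" unfolding inj_def by blast
  have key: "c^^(y-x) = id" if "x < y" "c^^x = c^^y" for x y
  proof -
    have bj: "bij (c^^x)" using bij_betw_funpow permutes_bij[OF assms(1)] by blast
    have "c^^y = c^^(y-x) \<circ> c^^x" using that funpow_add[of "y-x" x c] by simp
    show ?thesis
    proof
      fix z
      obtain w where "z = (c^^x) w" using bj by (metis bij_pointE)
      then show "(c^^(y-x)) z = id z"
        using \<open>c^^y = c^^(y-x) \<circ> c^^x\<close> that(2) by (metis comp_apply id_apply)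
    qed
  qed
  show ?thesis
  proof (cases "a < b")
    case True then show ?thesis using key[OF True ab(2)] by (intro exI[of _ "b-a"]) auto
  next
    case False then have "b < a" using ab(1) by simp
    then show ?thesis using key[OF \<open>b<a\<close> ab(2)[symmetric]] by (intro exI[of _ "a-b"]) auto
  qed
qed

theorem corollary19:
  fixes k :: nat and r :: "nat \<Rightarrow> nat" and \<Omega> :: "nat \<Rightarrow> 'a set"
    and G :: "nat \<Rightarrow> ('a \<Rightarrow> 'a) set"
  assumes "k \<ge> 1"
    and "\<And>i. i \<in> {1..k} \<Longrightarrow> r i > 0"
    and "\<And>i. i \<in> {1..k} \<Longrightarrow> finite (\<Omega> i) \<and> \<Omega> i \<noteq> {}"
    and "\<And>i j. i \<in> {1..k} \<Longrightarrow> j \<in> {1..k} \<Longrightarrow> i \<noteq> j \<Longrightarrow> \<Omega> i \<inter> \<Omega> j = {}"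
    and "\<And>i. i \<in> {1..k} \<Longrightarrow> perm_group (\<Omega> i) (G i)"
    and "\<And>i. i \<in> {1..k} \<Longrightarrow> cyclic_of_order (G i) (r i)"
  shows "EKR_property (\<Union>i\<in>{1..k}. \<Omega> i) (int_dprod {1..k} \<Omega> G)"
proof -
  define U where "U = (\<Union>i\<in>{1..k}. \<Omega> i)"
  define P where "P = int_dprod {1..k} \<Omega> G"
  have permG: "\<And>i p. i \<in> {1..k} \<Longrightarrow> p \<in> G i \<Longrightarrow> p permutes \<Omega> i"
    using assms(5) unfolding perm_group_def by blast
  have compG: "\<And>i p q. i \<in> {1..k} \<Longrightarrow> p \<in> G i \<Longrightarrow> q \<in> G i \<Longrightarrow> p \<circ> q \<in> G i"
    using assms(5) unfolding perm_group_def by blast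
  have "\<forall>i\<in>{1..k}. \<exists>c. c \<in> G i \<and> G i = range (\<lambda>n. c ^^ n)"
    using assms(6) unfolding cyclic_of_order_def by blast
  then obtain gen where gen: "\<And>i. i \<in> {1..k} \<Longrightarrow> gen i \<in> G i \<and> G i = range (\<lambda>n. gen i ^^ n)"
    by metis
  have genp: "\<And>i. i \<in> {1..k} \<Longrightarrow> gen i permutes \<Omega> i" using gen permG by blast
  have "\<forall>i\<in>{1..k}. \<exists>n>0. gen i ^^ n = id"
  proof
    fix i assume i: "i \<in> {1..k}"
    have "finite (G i)" using assms(2)[OF i] assms(6)[OF i] unfolding cyclic_of_order_def
      by (metis card.infinite less_irrefl)
    then show "\<exists>n>0. gen i ^^ n = id" using perm_pow_id[OF genp[OF i]] gen[OF i] by metis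
  qed
  then obtain Nf where Nf: "\<And>i. i \<in> {1..k} \<Longrightarrow> Nf i > 0 \<and> gen i ^^ Nf i = id" by metis
  define N where "N = (\<Prod>i\<in>{1..k}. Nf i)"
  have Npos: "N > 0" unfolding N_def using Nf by (simp add: prod_pos)
  have genN: "gen i ^^ N = id" if i: "i \<in> {1..k}" for i
  proof -
    have "N = Nf i * (\<Prod>j\<in>{1..k}-{i}. Nf j)" unfolding N_def
      using prod.remove[of "{1..k}" i Nf] i by simp
    then show ?thesis using Nf[OF i] funpow_mult by (metis id_funpow)
  qed
  define idx where "idx x = (SOME i. i \<in> {1..k} \<and> x \<in> \<Omega> i)" for x
  have idx: "idx x = i" if "i \<in> {1..k}" "x \<in> \<Omega> i" for i x
  proof -
    have "idx x \<in> {1..k} \<and> x \<in> \<Omega> (idx x)" unfolding idx_def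
      by (rule someI[of _ i]) (use that in blast)
    then show ?thesis using assms(4) that by blast
  qed
  define h where "h x = (if x \<in> U then gen (idx x) x else x)" for x
  have hpow: "(h^^n) x = (gen i ^^ n) x \<and> (gen i ^^ n) x \<in> \<Omega> i"
    if i: "i \<in> {1..k}" and x: "x \<in> \<Omega> i" for i x n
  proof (induction n)
    case 0 then show ?case using x by simp
  next
    case (Suc n)
    have U: "(gen i ^^ n) x \<in> U" using Suc i unfolding U_def by blast
    have "(h^^Suc n) x = h ((gen i ^^ n) x)" using Suc by simp
    also have "\<dots> = gen i ((gen i ^^ n) x)" unfolding h_def using U idx[OF i] Suc by simp
    finally show ?case using Suc permutes_in_image[OF genp[OF i]] by simp
  qed
  have hout: "(h^^n) x = x" if "x \<notin> U" for x n
    by (induction n) (auto simp: h_def that)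
  have hN: "h^^N = id"
  proof
    fix x show "(h^^N) x = id x"
    proof (cases "x \<in> U")
      case True
      then obtain i where "i \<in> {1..k}" "x \<in> \<Omega> i" unfolding U_def by blast
      then show ?thesis using hpow genN by simp
    qed (simp add: hout)
  qed
  have cancel: "(h^^(N-a)) ((h^^a) z) = z" if "a \<le> N" for a z
    using that hN funpow_add[of "N-a" a h] by (metis comp_apply id_apply le_add_diff_inverse2)
  have cancel2: "h^^a \<circ> h^^(N-a) = id" if "a \<le> N" for a
    using that hN funpow_add[of a "N-a" h] by simp
  have Pel: "\<exists>g. (\<forall>i\<in>{1..k}. g i \<in> G i) \<and> (\<forall>i\<in>{1..k}. \<forall>x\<in>\<Omega> i. \<pi> x = g i x)
       \<and> (\<forall>x. x \<notin> U \<longrightarrow> \<pi> x = x)" if "\<pi> \<in> P" for \<pi>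
    using that unfolding P_def int_dprod_def U_def by blast
  have comp_mem: "h^^c \<circ> \<pi> \<in> P" if pin: "\<pi> \<in> P" for c \<pi>
  proof -
    obtain g where g: "\<forall>i\<in>{1..k}. g i \<in> G i" "\<forall>i\<in>{1..k}. \<forall>x\<in>\<Omega> i. \<pi> x = g i x"
      "\<forall>x. x \<notin> U \<longrightarrow> \<pi> x = x" using Pel[OF pin] by blast
    show ?thesis unfolding P_def int_dprod_def
    proof (intro CollectI exI[of _ "\<lambda>i. gen i ^^ c \<circ> g i"] conjI ballI allI impI)
      fix i assume i: "i \<in> {1..k}"
      show "gen i ^^ c \<circ> g i \<in> G i" using compG[OF i] gen[OF i] g(1) i by blast
      fix x assume x: "x \<in> \<Omega> i"
      have "g i x \<in> \<Omega> i" using permutes_in_image[OF permG[OF i]] g(1) i x by blast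
      then show "(h ^^ c \<circ> \<pi>) x = (gen i ^^ c \<circ> g i) x" using hpow[OF i] g(2) i x by simp
    next
      fix x assume "x \<notin> (\<Union>i\<in>{1..k}. \<Omega> i)"
      then show "(h ^^ c \<circ> \<pi>) x = x" using g(3) hout unfolding U_def by simp
    qed
  qed
  have maps: "t x \<in> U" if pin: "t \<in> P" and xin: "x \<in> U" for t x
  proof -
    obtain g where g: "\<forall>i\<in>{1..k}. g i \<in> G i" "\<forall>i\<in>{1..k}. \<forall>x\<in>\<Omega> i. t x = g i x"
      using Pel[OF pin] by blast
    obtain i where i: "i \<in> {1..k}" "x \<in> \<Omega> i" using xin unfolding U_def by blast
    have "g i x \<in> \<Omega> i" using permutes_in_image[OF permG[OF i(1)]] g(1) i by blast
    then show ?thesis using g(2) i unfolding U_def by auto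
  qed
  have surjP: "surj t" if pin: "t \<in> P" for t
  proof -
    obtain g where g: "\<forall>i\<in>{1..k}. g i \<in> G i" "\<forall>i\<in>{1..k}. \<forall>x\<in>\<Omega> i. t x = g i x"
      "\<forall>x. x \<notin> U \<longrightarrow> t x = x" using Pel[OF pin] by blast
    have "y \<in> range t" for y
    proof (cases "y \<in> U")
      case True
      then obtain i where i: "i \<in> {1..k}" "y \<in> \<Omega> i" unfolding U_def by blast
      have p: "g i permutes \<Omega> i" using permG[OF i(1)] g(1) i by blast
      have "inv (g i) y \<in> \<Omega> i" using permutes_in_image[OF permutes_inv[OF p]] i by blast
      moreover have "g i (inv (g i) y) = y" using permutes_inverses(1)[OF p] by blast
      ultimately show ?thesis using g(2) i by (metis rangeI)
    next
      case False then show ?thesis using g(3) by (metis rangeI)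
    qed
    then show ?thesis by blast
  qed
  have finU: "finite U" unfolding U_def using assms(3) by blast
  have neU: "U \<noteq> {}" unfolding U_def using assms(1,3) by fastforce
  have finP: "finite P"
  proof -
    have "inj_on (\<lambda>\<pi>. restrict \<pi> U) P"
    proof (rule inj_onI)
      fix a b assume ab: "a \<in> P" "b \<in> P" "restrict a U = restrict b U"
      show "a = b"
      proof
        fix x show "a x = b x"
        proof (cases "x \<in> U")
          case True then show ?thesis using ab(3) by (metis restrict_apply')
        next
          case False then show ?thesis using Pel[OF ab(1)] Pel[OF ab(2)] by metis
        qed
      qed
    qed
    moreover have "(\<lambda>\<pi>. restrict \<pi> U) ` P \<subseteq> U \<rightarrow>\<^sub>E U" using maps by auto
    moreover have "finite (U \<rightarrow>\<^sub>E U)" using finU by (simp add: finite_PiE)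
    ultimately show ?thesis by (meson finite_imageD finite_subset)
  qed
  define p where "p x = (LEAST n. 0 < n \<and> (h^^n) x = x)" for x
  have pex: "0 < p x \<and> (h^^(p x)) x = x" for x
    unfolding p_def by (rule LeastI[of _ N]) (use Npos hN in simp)
  have ple: "p x \<le> n" if "0 < n" "(h^^n) x = x" for x n
    unfolding p_def using that by (simp add: Least_le)
  define m where "m = Min (p ` U)"
  have "m \<in> p ` U" unfolding m_def using finU neU by (intro Min_in) auto
  then obtain x0 where x0: "x0 \<in> U" "p x0 = m" by auto
  have mpos: "0 < m" and hm: "(h^^m) x0 = x0" using pex[of x0] x0 by auto
  have mN: "m \<le> N" using ple[of N x0] Npos hN x0 by simp
  have minimal: "(h^^j) x \<noteq> x" if "x \<in> U" "0 < j" "j < m" for x j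
  proof
    assume "(h^^j) x = x"
    then have "p x \<le> j" using ple that by blast
    moreover have "m \<le> p x" unfolding m_def using finU that(1) by simp
    ultimately show False using that by simp
  qed
  have hmq: "(h^^(m*q)) x0 = x0" for q
  proof (induction q)
    case (Suc q)
    have "h^^(m * Suc q) = h^^m \<circ> h^^(m*q)" by (simp add: funpow_add[symmetric])
    then show ?case using Suc hm by simp
  qed simp
  have orb: "\<exists>n. \<pi> x0 = (h^^n) x0" if pin: "\<pi> \<in> P" for \<pi>
  proof -
    obtain g where g: "\<forall>i\<in>{1..k}. g i \<in> G i" "\<forall>i\<in>{1..k}. \<forall>x\<in>\<Omega> i. \<pi> x = g i x"
      using Pel[OF pin] by blast
    obtain i where i: "i \<in> {1..k}" "x0 \<in> \<Omega> i" using x0 unfolding U_def by blast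
    obtain n where "g i = gen i ^^ n" using g(1) gen i by blast
    then show ?thesis using g(2) hpow[OF i] i by metis
  qed
  define ja where "ja \<pi> = (SOME n. \<pi> x0 = (h^^n) x0) mod m" for \<pi>
  have ja: "ja \<pi> < m \<and> \<pi> x0 = (h^^(ja \<pi>)) x0" if "\<pi> \<in> P" for \<pi>
  proof -
    define n where "n = (SOME n. \<pi> x0 = (h^^n) x0)"
    have n: "\<pi> x0 = (h^^n) x0" unfolding n_def using orb[OF that] by (rule someI_ex)
    have "h^^n = h^^(n mod m) \<circ> h^^(m * (n div m))"
      by (simp add: funpow_add[symmetric])
    then have "(h^^n) x0 = (h^^(n mod m)) x0" using hmq by simp
    then show ?thesis using n mpos unfolding ja_def n_def[symmetric] by simp
  qed
  define f where "f \<pi> = h^^(N - ja \<pi>) \<circ> \<pi>" for \<pi>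
  have fstab: "f \<pi> \<in> stabilizer P x0" if "\<pi> \<in> P" for \<pi>
    unfolding stabilizer_def f_def using comp_mem[OF that] ja[OF that] cancel[of "ja \<pi>" x0] mN
    by auto
  have fback: "\<pi> = h^^(ja \<pi>) \<circ> f \<pi>" if "\<pi> \<in> P" for \<pi>
    unfolding f_def using cancel2[of "ja \<pi>"] ja[OF that] mN
    by (metis comp_assoc id_comp less_imp_le_nat order.strict_trans2)
  have eqj: "a = b" if "a < m" "b < m" "y \<in> U" "(h^^a) y = (h^^b) y" "a \<le> b" for a b y
  proof (rule ccontr)
    assume "a \<noteq> b"
    have "(h^^b) y = (h^^a) ((h^^(b-a)) y)" using that(5) funpow_add[of a "b-a" h] by simp
    then have "(h^^(N-a)) ((h^^a) y) = (h^^(N-a)) ((h^^a) ((h^^(b-a)) y))" using that(4) by simp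
    moreover have "a \<le> N" using that mN by simp
    ultimately have "y = (h^^(b-a)) y" using cancel[of a y] cancel[of a "(h^^(b-a)) y"] by simp
    moreover have "b - a < m" using that by linarith
    ultimately show False using minimal[of y "b-a"] that \<open>a \<noteq> b\<close> by simp
  qed
  have EKR: "card S \<le> Max ((\<lambda>x. card (stabilizer P x)) ` U)"
    if S: "S \<subseteq> P" "intersecting U S" for S
  proof -
    have "inj_on f S"
    proof (rule inj_onI)
      fix \<pi> \<tau> assume \<pi>: "\<pi> \<in> S" and \<tau>: "\<tau> \<in> S" and eq: "f \<pi> = f \<tau>"
      have \<pi>P: "\<pi> \<in> P" and \<tau>P: "\<tau> \<in> P" using \<pi> \<tau> S by auto
      obtain x where x: "x \<in> U" "inv \<tau> (\<pi> x) = x"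
        using S(2) \<pi> \<tau> unfolding intersecting_def intersect_def by auto
      have "\<pi> x = \<tau> x" using x(2) surj_f_inv_f[OF surjP[OF \<tau>P]] by metis
      moreover have "\<pi> x = (h^^(ja \<pi>)) (f \<pi> x)" using fback[OF \<pi>P] by (metis comp_apply)
      moreover have "\<tau> x = (h^^(ja \<tau>)) (f \<pi> x)" using fback[OF \<tau>P] eq by (metis comp_apply)
      moreover have "f \<pi> x \<in> U" using fstab[OF \<pi>P] maps x(1) unfolding stabilizer_def by blast
      ultimately have "ja \<pi> = ja \<tau>"
        using eqj ja[OF \<pi>P] ja[OF \<tau>P] by (metis nat_le_linear)
      then show "\<pi> = \<tau>" using fback[OF \<pi>P] fback[OF \<tau>P] eq by metis
    qed
    moreover have "f ` S \<subseteq> stabilizer P x0" using fstab S by blast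
    moreover have "finite (stabilizer P x0)" using finP unfolding stabilizer_def by simp
    ultimately have "card S \<le> card (stabilizer P x0)" by (rule card_inj_on_le)
    also have "\<dots> \<le> Max ((\<lambda>x. card (stabilizer P x)) ` U)"
      using finU x0(1) by (intro Max_ge) auto
    finally show ?thesis .
  qed
  show ?thesis unfolding EKR_property_def using EKR unfolding U_def P_def by blast
qed

end
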